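(* Let $G=(V,E)$ be a finite simple connected graph without isolated vertices which has two different vertices $u$ and $v$ satisfying $N[u]\subseteq N[v]$. Then Dom has a winning strategy in the Dom-start Disjoint Domination Game played on $G$.
   Context: For a vertex $v$, $N[v]$ denotes its closed neighborhood. The Disjoint Domination Game on an isolate-free graph $G$ is played by Dom and Sepy with colors $p$ and $b$; $V_p,V_b$ denote the current sets of vertices of each color. Players alternate; either player may use either color. A move chooses a vertex $v$ and a color $c$ such that (i) $v$ is uncolored and (ii) some $w\in N[v]$ satisfies $N[w]\cap V_c=\emptyset$ (before the move); then $v$ gets color $c$. A player must make a legal move on his turn (no passing). The game ends as soon as either (s* ) some vertex $x$ has $N[x]\subseteq V_p$ or $N[x]\subseteq V_b$ — Sepy wins; or (d* ) both $V_p$ and $V_b$ are dominating sets of $G$ — Dom wins. In the Dom-start game Dom moves first. *)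

theory Defs
  imports Main
begin

definition simple_graph :: "'a set \<Rightarrow> ('a \<Rightarrow> 'a \<Rightarrow> bool) \<Rightarrow> bool" where
  "simple_graph V E \<longleftrightarrow> finite V \<and> (\<forall>x y. E x y \<longrightarrow> x \<in> V \<and> y \<in> V)
     \<and> (\<forall>x y. E x y \<longrightarrow> E y x) \<and> (\<forall>x. \<not> E x x)"

definition connected_graph :: "'a set \<Rightarrow> ('a \<Rightarrow> 'a \<Rightarrow> bool) \<Rightarrow> bool" where
  "connected_graph V E \<longleftrightarrow> (\<forall>x\<in>V. \<forall>y\<in>V. E\<^sup>*\<^sup>* x y)"

definition isolate_free :: "'a set \<Rightarrow> ('a \<Rightarrow> 'a \<Rightarrow> bool) \<Rightarrow> bool" where
  "isolate_free V E \<longleftrightarrow> (\<forall>x\<in>V. \<exists>y. E x y)"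

definition cnbhd :: "('a \<Rightarrow> 'a \<Rightarrow> bool) \<Rightarrow> 'a \<Rightarrow> 'a set" where
  "cnbhd E v = insert v {w. E v w}"

definition dominating :: "'a set \<Rightarrow> ('a \<Rightarrow> 'a \<Rightarrow> bool) \<Rightarrow> 'a set \<Rightarrow> bool" where
  "dominating V E D \<longleftrightarrow> D \<subseteq> V \<and> (\<forall>x\<in>V. cnbhd E x \<inter> D \<noteq> {})"

datatype color = P | B

definition upd_col :: "color \<Rightarrow> 'a \<Rightarrow> 'a set \<Rightarrow> 'a set \<Rightarrow> 'a set \<times> 'a set" where
  "upd_col c v Vp Vb = (if c = P then (insert v Vp, Vb) else (Vp, insert v Vb))"

definition col_set :: "color \<Rightarrow> 'a set \<Rightarrow> 'a set \<Rightarrow> 'a set" where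
  "col_set c Vp Vb = (if c = P then Vp else Vb)"

definition legal_move :: "'a set \<Rightarrow> ('a \<Rightarrow> 'a \<Rightarrow> bool) \<Rightarrow> 'a set \<Rightarrow> 'a set \<Rightarrow> 'a \<Rightarrow> color \<Rightarrow> bool" where
  "legal_move V E Vp Vb v c \<longleftrightarrow> v \<in> V \<and> v \<notin> Vp \<and> v \<notin> Vb \<and>
     (\<exists>w\<in>cnbhd E v. cnbhd E w \<inter> col_set c Vp Vb = {})"

definition sepy_cond :: "'a set \<Rightarrow> ('a \<Rightarrow> 'a \<Rightarrow> bool) \<Rightarrow> 'a set \<Rightarrow> 'a set \<Rightarrow> bool" where
  "sepy_cond V E Vp Vb \<longleftrightarrow> (\<exists>x\<in>V. cnbhd E x \<subseteq> Vp \<or> cnbhd E x \<subseteq> Vb)"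

definition dom_cond :: "'a set \<Rightarrow> ('a \<Rightarrow> 'a \<Rightarrow> bool) \<Rightarrow> 'a set \<Rightarrow> 'a set \<Rightarrow> bool" where
  "dom_cond V E Vp Vb \<longleftrightarrow> dominating V E Vp \<and> dominating V E Vb"

text \<open>dom_wins V E t Vp Vb: from position (Vp,Vb), with Dom to move iff t,
  Dom has a winning strategy. (Least fixed point = Dom forces a win in finitely many moves.)\<close>
inductive dom_wins :: "'a set \<Rightarrow> ('a \<Rightarrow> 'a \<Rightarrow> bool) \<Rightarrow> bool \<Rightarrow> 'a set \<Rightarrow> 'a set \<Rightarrow> bool"
  for V E where
  won: "\<not> sepy_cond V E Vp Vb \<Longrightarrow> dom_cond V E Vp Vb \<Longrightarrow> dom_wins V E t Vp Vb"
| dom_move: "\<not> sepy_cond V E Vp Vb \<Longrightarrow> \<not> dom_cond V E Vp Vb \<Longrightarrow> legal_move V E Vp Vb v c \<Longrightarrow>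
     dom_wins V E False (fst (upd_col c v Vp Vb)) (snd (upd_col c v Vp Vb)) \<Longrightarrow>
     dom_wins V E True Vp Vb"
| sepy_move: "\<not> sepy_cond V E Vp Vb \<Longrightarrow> \<not> dom_cond V E Vp Vb \<Longrightarrow>
     (\<exists>v c. legal_move V E Vp Vb v c) \<Longrightarrow>
     (\<forall>v c. legal_move V E Vp Vb v c \<longrightarrow>
        dom_wins V E True (fst (upd_col c v Vp Vb)) (snd (upd_col c v Vp Vb))) \<Longrightarrow>
     dom_wins V E False Vp Vb"

end

theory Submission
  imports Defs
begin

locale gm =
  fixes V :: "'a set" and E :: "'a \<Rightarrow> 'a \<Rightarrow> bool" and u v :: 'a
  assumes sg: "simple_graph V E" and cg: "connected_graph V E" and ifr: "isolate_free V E"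
    and uV: "u \<in> V" and vV: "v \<in> V" and uv: "u \<noteq> v"
    and sub: "cnbhd E u \<subseteq> cnbhd E v"
begin

lemma fin: "finite V" using sg by (simp add: simple_graph_def)
lemma edgeV: "E x y \<Longrightarrow> x \<in> V \<and> y \<in> V" using sg by (simp add: simple_graph_def)
lemma esym: "E x y \<Longrightarrow> E y x" using sg by (simp add: simple_graph_def)
lemma irr: "\<not> E x x" using sg by (simp add: simple_graph_def)
lemma nb: "w \<in> cnbhd E x \<longleftrightarrow> w = x \<or> E x w" by (auto simp: cnbhd_def)
lemma Evu: "E v u" using sub uv by (auto simp: cnbhd_def)
lemma hasnb: "x \<in> V \<Longrightarrow> \<exists>y. E x y" using ifr by (simp add: isolate_free_def)

definition Inv :: "'a set \<Rightarrow> 'a set \<Rightarrow> bool" where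
  "Inv Vp Vb \<longleftrightarrow> Vp \<subseteq> V \<and> Vb \<subseteq> V \<and> Vp \<inter> Vb = {} \<and> v \<in> Vp \<and> u \<notin> Vp \<and>
     (\<forall>x\<in>Vp. x \<noteq> v \<longrightarrow> (\<exists>y\<in>Vb. E x y)) \<and> (\<forall>x\<in>Vb. \<exists>y\<in>Vp. E x y)"

lemma noSepy: assumes "Inv Vp Vb" shows "\<not> sepy_cond V E Vp Vb"
proof
  assume "sepy_cond V E Vp Vb"
  then obtain x where x: "x \<in> V" "cnbhd E x \<subseteq> Vp \<or> cnbhd E x \<subseteq> Vb"
    by (auto simp: sepy_cond_def)
  show False
  proof (cases "cnbhd E x \<subseteq> Vp")
    case True
    hence xp: "x \<in> Vp" by (auto simp: nb)
    show False
    proof (cases "x = v")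
      case True
      then show ?thesis using \<open>cnbhd E x \<subseteq> Vp\<close> Evu assms by (auto simp: nb Inv_def)
    next
      case False
      then obtain y where "y \<in> Vb" "E x y" using assms xp by (auto simp: Inv_def)
      then show ?thesis using \<open>cnbhd E x \<subseteq> Vp\<close> assms by (auto simp: nb Inv_def)
    qed
  next
    case False
    hence xb: "cnbhd E x \<subseteq> Vb" using x by auto
    hence "x \<in> Vb" by (auto simp: nb)
    then obtain y where "y \<in> Vp" "E x y" using assms by (auto simp: Inv_def)
    then show ?thesis using xb assms by (auto simp: nb Inv_def)
  qed
qed

lemma u_not_p: assumes "v \<in> Vp" shows "\<not> legal_move V E Vp Vb u P"
proof
  assume "legal_move V E Vp Vb u P"
  then obtain w where w: "w \<in> cnbhd E u" "cnbhd E w \<inter> Vp = {}"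
    by (auto simp: legal_move_def col_set_def)
  hence "w \<in> cnbhd E v" using sub by auto
  hence "v \<in> cnbhd E w" by (auto simp: nb intro: esym)
  thus False using w assms by auto
qed

lemma card_dec: assumes "legal_move V E Vp Vb y c"
  shows "card (V - (fst (upd_col c y Vp Vb) \<union> snd (upd_col c y Vp Vb))) < card (V - (Vp \<union> Vb))"
proof -
  have eq: "fst (upd_col c y Vp Vb) \<union> snd (upd_col c y Vp Vb) = insert y (Vp \<union> Vb)"
    by (cases c) (auto simp: upd_col_def)
  have "V - insert y (Vp \<union> Vb) \<subset> V - (Vp \<union> Vb)" using assms by (auto simp: legal_move_def)
  thus ?thesis unfolding eq using fin by (simp add: psubset_card_mono)
qed

lemma path: assumes "E\<^sup>*\<^sup>* a x" "a \<in> C" "cnbhd E x \<inter> C = {}"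
  shows "\<exists>z b w. z \<notin> C \<and> b \<in> C \<and> E z b \<and> w \<in> cnbhd E z \<and> cnbhd E w \<inter> C = {}"
  using assms
proof (induction rule: rtranclp_induct)
  case base
  then show ?case by (auto simp: nb)
next
  case (step m x)
  show ?case
  proof (cases "cnbhd E m \<inter> C = {}")
    case True
    then show ?thesis using step by blast
  next
    case False
    then obtain b where b: "b \<in> cnbhd E m" "b \<in> C" by auto
    have mx: "m \<in> cnbhd E x" using step(2) by (auto simp: nb intro: esym)
    hence "m \<notin> C" using step(5) by auto
    hence "E m b" using b by (auto simp: nb)
    moreover have "x \<in> cnbhd E m" using step(2) by (auto simp: nb)
    ultimately show ?thesis using \<open>m \<notin> C\<close> b step(5) by blast
  qed
qed

lemma upd_P: "upd_col P z Vp Vb = (insert z Vp, Vb)" by (simp add: upd_col_def)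
lemma upd_B: "upd_col B z Vp Vb = (Vp, insert z Vb)" by (simp add: upd_col_def)

lemma inv_addP: "Inv Vp Vb \<Longrightarrow> z \<in> V \<Longrightarrow> z \<notin> Vp \<Longrightarrow> z \<notin> Vb \<Longrightarrow> z \<noteq> u \<Longrightarrow> y \<in> Vb \<Longrightarrow> E z y
  \<Longrightarrow> Inv (insert z Vp) Vb"
  unfolding Inv_def by (auto intro: esym)

lemma inv_addB: "Inv Vp Vb \<Longrightarrow> z \<in> V \<Longrightarrow> z \<notin> Vp \<Longrightarrow> z \<notin> Vb \<Longrightarrow> y \<in> Vp \<Longrightarrow> E z y
  \<Longrightarrow> Inv Vp (insert z Vb)"
  unfolding Inv_def by (auto intro: esym)

lemma inv_add2: "Inv Vp Vb \<Longrightarrow> y \<in> V \<Longrightarrow> z \<in> V \<Longrightarrow> y \<notin> Vp \<union> Vb \<Longrightarrow> z \<notin> Vp \<union> Vb \<Longrightarrow> y \<noteq> z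
  \<Longrightarrow> E y z \<Longrightarrow> y \<noteq> u \<Longrightarrow> Inv (insert y Vp) (insert z Vb)"
  unfolding Inv_def by (auto intro: esym)

lemma free_move: assumes inv: "Inv Vp Vb" and nd: "\<not> dom_cond V E Vp Vb"
  shows "\<exists>z d. legal_move V E Vp Vb z d \<and> Inv (fst (upd_col d z Vp Vb)) (snd (upd_col d z Vp Vb))"
proof -
  have sub2: "Vp \<subseteq> V" "Vb \<subseteq> V" using inv by (auto simp: Inv_def)
  obtain x where xV: "x \<in> V" and xd: "cnbhd E x \<inter> Vp = {} \<or> cnbhd E x \<inter> Vb = {}"
    using nd sub2 by (auto simp: dom_cond_def dominating_def)
  show ?thesis
  proof (cases "x \<in> Vp \<union> Vb")
    case True
    have "x = v \<and> cnbhd E v \<inter> Vb = {}"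
    proof (cases "x \<in> Vp")
      case True
      hence "cnbhd E x \<inter> Vb = {}" using xd by (auto simp: cnbhd_def)
      moreover have "x = v" using True calculation inv unfolding Inv_def by (metis disjoint_iff nb)
      ultimately show ?thesis by simp
    next
      case False
      hence "x \<in> Vb" using \<open>x \<in> Vp \<union> Vb\<close> by auto
      hence "cnbhd E x \<inter> Vp = {}" using xd inv by (auto simp: cnbhd_def)
      thus ?thesis using \<open>x \<in> Vb\<close> inv unfolding Inv_def by (metis disjoint_iff nb)
    qed
    hence nv: "cnbhd E v \<inter> Vb = {}" by simp
    have uv': "u \<in> cnbhd E v" using Evu by (simp add: nb)
    hence ub: "u \<notin> Vb" using nv by auto
    have up: "u \<notin> Vp" using inv by (simp add: Inv_def)
    have "v \<in> cnbhd E u" using Evu by (auto simp: nb intro: esym)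
    hence "legal_move V E Vp Vb u B" using uV ub up nv by (auto simp: legal_move_def col_set_def)
    moreover have "Inv Vp (insert u Vb)" using inv_addB[OF inv uV up ub _ esym[OF Evu]] inv
      by (auto simp: Inv_def)
    ultimately show ?thesis by (metis fst_conv snd_conv upd_B)
  next
    case False
    show ?thesis
    proof (cases "cnbhd E x \<inter> (Vp \<union> Vb) = {}")
      case False
      then obtain a where a: "a \<in> cnbhd E x" "a \<in> Vp \<union> Vb" by auto
      hence xa: "E x a" using \<open>x \<notin> Vp \<union> Vb\<close> by (auto simp: nb)
      show ?thesis
      proof (cases "cnbhd E x \<inter> Vp = {}")
        case True
        hence "a \<in> Vb" using a by auto
        have lg: "legal_move V E Vp Vb x P" using xV \<open>x \<notin> Vp \<union> Vb\<close> True
          by (auto simp: legal_move_def col_set_def nb)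
        hence "x \<noteq> u" using u_not_p inv by (auto simp: Inv_def)
        hence "Inv (insert x Vp) Vb" using inv_addP[OF inv xV _ _ _ \<open>a \<in> Vb\<close> xa] \<open>x \<notin> Vp \<union> Vb\<close> by auto
        then show ?thesis using lg by (metis fst_conv snd_conv upd_P)
      next
        case False
        hence T: "cnbhd E x \<inter> Vb = {}" using xd by auto
        hence "a \<in> Vp" using a by auto
        have lg: "legal_move V E Vp Vb x B" using xV \<open>x \<notin> Vp \<union> Vb\<close> T
          by (auto simp: legal_move_def col_set_def nb)
        have "Inv Vp (insert x Vb)" using inv_addB[OF inv xV _ _ \<open>a \<in> Vp\<close> xa] \<open>x \<notin> Vp \<union> Vb\<close> by auto
        then show ?thesis using lg by (metis fst_conv snd_conv upd_B)
      qed
    next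
      case True
      have "E\<^sup>*\<^sup>* v x" using cg vV xV by (simp add: connected_graph_def)
      moreover have "v \<in> Vp \<union> Vb" using inv by (simp add: Inv_def)
      ultimately obtain z b w where zb: "z \<notin> Vp \<union> Vb" "b \<in> Vp \<union> Vb" "E z b" "w \<in> cnbhd E z"
        "cnbhd E w \<inter> (Vp \<union> Vb) = {}"
        using path[OF _ _ True] by blast
      have zV: "z \<in> V" using zb edgeV by blast
      show ?thesis
      proof (cases "b \<in> Vp")
        case True
        have lg: "legal_move V E Vp Vb z B" using zV zb by (auto simp: legal_move_def col_set_def)
        have "Inv Vp (insert z Vb)" using inv_addB[OF inv zV _ _ True] zb by auto
        then show ?thesis using lg by (metis fst_conv snd_conv upd_B)
      next
        case False
        hence bb: "b \<in> Vb" using zb by auto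
        have lg: "legal_move V E Vp Vb z P" using zV zb by (auto simp: legal_move_def col_set_def)
        hence "z \<noteq> u" using u_not_p inv by (auto simp: Inv_def)
        hence "Inv (insert z Vp) Vb" using inv_addP[OF inv zV _ _ _ bb] zb by auto
        then show ?thesis using lg by (metis fst_conv snd_conv upd_P)
      qed
    qed
  qed
qed

lemma sepy_mono: "sepy_cond V E A C \<Longrightarrow> A \<subseteq> A' \<Longrightarrow> C \<subseteq> C' \<Longrightarrow> sepy_cond V E A' C'"
  unfolding sepy_cond_def by blast

lemma legal_nb: assumes "legal_move V E Vp Vb y c"
  shows "\<exists>t. E y t \<and> t \<notin> col_set c Vp Vb"
proof -
  obtain w where w: "w \<in> cnbhd E y" "cnbhd E w \<inter> col_set c Vp Vb = {}"
    using assms by (auto simp: legal_move_def)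
  have yV: "y \<in> V" using assms by (simp add: legal_move_def)
  show ?thesis
  proof (cases "w = y")
    case True
    obtain t where "E y t" using hasnb yV by blast
    then show ?thesis using w True by (auto simp: nb)
  next
    case False
    then show ?thesis using w by (auto simp: nb)
  qed
qed

lemma response: assumes inv: "Inv Vp Vb" and lg: "legal_move V E Vp Vb y c"
  shows "\<not> sepy_cond V E (fst (upd_col c y Vp Vb)) (snd (upd_col c y Vp Vb)) \<and>
    (\<not> dom_cond V E (fst (upd_col c y Vp Vb)) (snd (upd_col c y Vp Vb)) \<longrightarrow>
     (\<exists>z d. legal_move V E (fst (upd_col c y Vp Vb)) (snd (upd_col c y Vp Vb)) z d \<and>
        Inv (fst (upd_col d z (fst (upd_col c y Vp Vb)) (snd (upd_col c y Vp Vb))))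
            (snd (upd_col d z (fst (upd_col c y Vp Vb)) (snd (upd_col c y Vp Vb))))))"
proof -
  have yV: "y \<in> V" and yu: "y \<notin> Vp" "y \<notin> Vb" using lg by (auto simp: legal_move_def)
  obtain t where yt: "E y t" and tc: "t \<notin> col_set c Vp Vb" using legal_nb[OF lg] by blast
  have tV: "t \<in> V" using yt edgeV by blast
  have ty: "t \<noteq> y" using yt irr by auto
  have vp: "v \<in> Vp" using inv by (simp add: Inv_def)
  show ?thesis
  proof (cases c)
    case P
    have yu': "y \<noteq> u" using lg u_not_p[OF vp] P by auto
    show ?thesis
    proof (cases "\<exists>s\<in>Vb. E y s")
      case True
      then obtain s where "s \<in> Vb" "E y s" by blast
      hence I: "Inv (insert y Vp) Vb" using inv_addP[OF inv yV yu yu'] by blast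
      show ?thesis unfolding P upd_P fst_conv snd_conv using noSepy[OF I] free_move[OF I] by blast
    next
      case False
      hence tb: "t \<notin> Vb" using yt by blast
      have tp: "t \<notin> Vp" using tc P by (simp add: col_set_def)
      have I: "Inv (insert y Vp) (insert t Vb)" using inv_add2[OF inv yV tV _ _ _ yt yu'] yu tp tb ty by auto
      have ns: "\<not> sepy_cond V E (insert y Vp) Vb" using noSepy[OF I] sepy_mono by blast
      have "cnbhd E y \<inter> Vb = {}" using False yu by (auto simp: nb)
      hence "legal_move V E (insert y Vp) Vb t B" using tV tp tb ty yt
        by (auto simp: legal_move_def col_set_def nb intro!: bexI[of _ y] esym)
      moreover have "Inv (fst (upd_col B t (insert y Vp) Vb)) (snd (upd_col B t (insert y Vp) Vb))"
        using I by (simp add: upd_B)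
      ultimately show ?thesis unfolding P upd_P fst_conv snd_conv using ns by blast
    qed
  next
    case B
    show ?thesis
    proof (cases "\<exists>s\<in>Vp. E y s")
      case True
      then obtain s where "s \<in> Vp" "E y s" by blast
      hence I: "Inv Vp (insert y Vb)" using inv_addB[OF inv yV yu] by blast
      show ?thesis unfolding B upd_B fst_conv snd_conv using noSepy[OF I] free_move[OF I] by blast
    next
      case False
      hence tp: "t \<notin> Vp" using yt by blast
      have tb: "t \<notin> Vb" using tc B by (simp add: col_set_def)
      have "cnbhd E y \<inter> Vp = {}" using False yu by (auto simp: nb)
      hence lg2: "legal_move V E Vp (insert y Vb) t P" using tV tp tb ty yt
        by (auto simp: legal_move_def col_set_def nb intro!: bexI[of _ y] esym)
      hence tu: "t \<noteq> u" using u_not_p[OF vp] by blast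
      have I: "Inv (insert t Vp) (insert y Vb)" using inv_add2[OF inv tV yV _ _ _ esym[OF yt] tu] yu tp tb ty by auto
      have ns: "\<not> sepy_cond V E Vp (insert y Vb)" using noSepy[OF I] sepy_mono by blast
      moreover have "Inv (fst (upd_col P t Vp (insert y Vb))) (snd (upd_col P t Vp (insert y Vb)))"
        using I by (simp add: upd_P)
      ultimately show ?thesis unfolding B upd_B fst_conv snd_conv using lg2 by blast
    qed
  qed
qed

lemma main: "Inv Vp Vb \<Longrightarrow> dom_wins V E False Vp Vb"
proof (induction "card (V - (Vp \<union> Vb))" arbitrary: Vp Vb rule: less_induct)
  case less
  have ns: "\<not> sepy_cond V E Vp Vb" using noSepy[OF less.prems] .
  show ?case
  proof (cases "dom_cond V E Vp Vb")
    case True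
    then show ?thesis using ns by (auto intro: dom_wins.won)
  next
    case False
    show ?thesis
    proof (rule dom_wins.sepy_move[OF ns False])
      show "\<exists>v c. legal_move V E Vp Vb v c" using free_move[OF less.prems False] by blast
      show "\<forall>y c. legal_move V E Vp Vb y c \<longrightarrow>
        dom_wins V E True (fst (upd_col c y Vp Vb)) (snd (upd_col c y Vp Vb))"
      proof (intro allI impI)
        fix y c assume lg: "legal_move V E Vp Vb y c"
        define Vp' where "Vp' = fst (upd_col c y Vp Vb)"
        define Vb' where "Vb' = snd (upd_col c y Vp Vb)"
        have R: "\<not> sepy_cond V E Vp' Vb' \<and> (\<not> dom_cond V E Vp' Vb' \<longrightarrow>
          (\<exists>z d. legal_move V E Vp' Vb' z d \<and> Inv (fst (upd_col d z Vp' Vb')) (snd (upd_col d z Vp' Vb'))))"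
          using response[OF less.prems lg] unfolding Vp'_def Vb'_def .
        have c1: "card (V - (Vp' \<union> Vb')) < card (V - (Vp \<union> Vb))"
          using card_dec[OF lg] unfolding Vp'_def Vb'_def .
        show "dom_wins V E True Vp' Vb'" unfolding Vp'_def[symmetric] Vb'_def[symmetric]
        proof (cases "dom_cond V E Vp' Vb'")
          case True
          then show ?thesis using R by (auto intro: dom_wins.won)
        next
          case False
          then obtain z d where lg2: "legal_move V E Vp' Vb' z d"
            and I: "Inv (fst (upd_col d z Vp' Vb')) (snd (upd_col d z Vp' Vb'))" using R by blast
          have "card (V - (fst (upd_col d z Vp' Vb') \<union> snd (upd_col d z Vp' Vb'))) < card (V - (Vp \<union> Vb))"
            using card_dec[OF lg2] c1 by linarith
          hence "dom_wins V E False (fst (upd_col d z Vp' Vb')) (snd (upd_col d z Vp' Vb'))"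
            using less.hyps I by blast
          then show ?thesis using dom_wins.dom_move[OF _ False lg2] R by blast
        qed
      qed
    qed
  qed
qed

lemma final: "dom_wins V E True {} {}"
proof -
  have ns: "\<not> sepy_cond V E {} {}" by (auto simp: sepy_cond_def cnbhd_def)
  have nd: "\<not> dom_cond V E {} {}" using uV by (auto simp: dom_cond_def dominating_def)
  have lg: "legal_move V E {} {} v P" using vV by (auto simp: legal_move_def col_set_def cnbhd_def)
  have I: "Inv {v} {}" using vV uv by (auto simp: Inv_def)
  have "dom_wins V E False (fst (upd_col P v {} {})) (snd (upd_col P v {} {}))"
    using main I by (simp add: upd_P)
  thus ?thesis using dom_wins.dom_move[OF ns nd lg] by blast
qed

end

theorem theorem8:
  fixes V :: "'a set" and E :: "'a \<Rightarrow> 'a \<Rightarrow> bool" and u v :: 'a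
  assumes "simple_graph V E" and "connected_graph V E" and "isolate_free V E"
    and "u \<in> V" and "v \<in> V" and "u \<noteq> v"
    and "cnbhd E u \<subseteq> cnbhd E v"
  shows "dom_wins V E True {} {}"
proof -
  interpret gm V E u v using assms by (unfold_locales)
  show ?thesis by (rule final)
qed

end
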